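(* Let $\Gamma=(V,E)$ be a graph and for each $v\in V$ let $M_v$ be a monoid. If every $M_v$ is right cancellative (respectively left cancellative, respectively cancellative), then the graph product $\Gamma_{v\in V}M_v$ is right cancellative (respectively left cancellative, respectively cancellative).
   Context: A graph $\Gamma=(V,E)$ consists of a set $V$ of vertices and an irreflexive symmetric relation $E\subseteq V\times V$ (edges); $u,v$ are adjacent if $(u,v)\in E$. For monoids $M_v$ ($v\in V$, taken pairwise disjoint), the graph product $\Gamma_{v\in V}M_v$ is the quotient of the free product of the $M_v$ by the congruence generated by all pairs $(mn,nm)$ with $m\in M_u$, $n\in M_v$ and $(u,v)\in E$. Equivalently, if $M_v$ has presentation $\langle A_v\mid R_v\rangle$, the graph product has presentation $\langle \bigcup_v A_v \mid \bigcup_v R_v \cup \{ab=ba : a\in A_u, b\in A_v, (u,v)\in E\}\rangle$. *)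

theory Defs
  imports "HOL-Algebra.Group"
begin

text \<open>The monoids M v are HOL-Algebra monoids;
 they are made pairwise disjoint by tagging each element with its vertex.
 Elements of the free product are words (lists) of tagged letters (v, a) with
 a in carrier (M v); the graph product is the quotient of the free monoid on
 these letters by the congruence generated by the free-product relations and
 the commutation relations for adjacent vertices.\<close>

definition gp_word :: "('v \<Rightarrow> ('a, 'b) monoid_scheme) \<Rightarrow> ('v \<times> 'a) list \<Rightarrow> bool" where
  "gp_word M w \<longleftrightarrow> (\<forall>(v, a) \<in> set w. a \<in> carrier (M v))"

inductive gp_cong :: "('v \<Rightarrow> 'v \<Rightarrow> bool) \<Rightarrow> ('v \<Rightarrow> ('a, 'b) monoid_scheme)
    \<Rightarrow> ('v \<times> 'a) list \<Rightarrow> ('v \<times> 'a) list \<Rightarrow> bool"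
  for E M where
  refl: "gp_cong E M w w"
| sym: "gp_cong E M u w \<Longrightarrow> gp_cong E M w u"
| trans: "gp_cong E M u w \<Longrightarrow> gp_cong E M w z \<Longrightarrow> gp_cong E M u z"
| compat: "gp_cong E M u w \<Longrightarrow> gp_cong E M (x @ u @ y) (x @ w @ y)"
| mult: "a \<in> carrier (M v) \<Longrightarrow> b \<in> carrier (M v) \<Longrightarrow>
         gp_cong E M [(v, a), (v, b)] [(v, a \<otimes>\<^bsub>M v\<^esub> b)]"
| one: "gp_cong E M [(v, \<one>\<^bsub>M v\<^esub>)] []"
| comm: "E u v \<Longrightarrow> a \<in> carrier (M u) \<Longrightarrow> b \<in> carrier (M v) \<Longrightarrow>
         gp_cong E M [(u, a), (v, b)] [(v, b), (u, a)]"

definition gp_rel :: "('v \<Rightarrow> 'v \<Rightarrow> bool) \<Rightarrow> ('v \<Rightarrow> ('a, 'b) monoid_scheme)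
    \<Rightarrow> (('v \<times> 'a) list \<times> ('v \<times> 'a) list) set" where
  "gp_rel E M = {(x, y). gp_word M x \<and> gp_word M y \<and> gp_cong E M x y}"

definition graph_product :: "('v \<Rightarrow> 'v \<Rightarrow> bool) \<Rightarrow> ('v \<Rightarrow> ('a, 'b) monoid_scheme)
    \<Rightarrow> ('v \<times> 'a) list set monoid" where
  "graph_product E M =
    \<lparr> carrier = {w. gp_word M w} // gp_rel E M,
      mult = (\<lambda>X Y. \<Union>x\<in>X. \<Union>y\<in>Y. gp_rel E M `` {x @ y}),
      one = gp_rel E M `` {[]} \<rparr>"

definition right_cancellative :: "('a, 'b) monoid_scheme \<Rightarrow> bool" where
  "right_cancellative G \<longleftrightarrow>
    (\<forall>a\<in>carrier G. \<forall>b\<in>carrier G. \<forall>c\<in>carrier G. a \<otimes>\<^bsub>G\<^esub> c = b \<otimes>\<^bsub>G\<^esub> c \<longrightarrow> a = b)"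

definition left_cancellative :: "('a, 'b) monoid_scheme \<Rightarrow> bool" where
  "left_cancellative G \<longleftrightarrow>
    (\<forall>a\<in>carrier G. \<forall>b\<in>carrier G. \<forall>c\<in>carrier G. c \<otimes>\<^bsub>G\<^esub> a = c \<otimes>\<^bsub>G\<^esub> b \<longrightarrow> a = b)"

definition cancellative :: "('a, 'b) monoid_scheme \<Rightarrow> bool" where
  "cancellative G \<longleftrightarrow> left_cancellative G \<and> right_cancellative G"

end

theory Submission
  imports Defs
begin

definition proj :: "'v \<Rightarrow> 'v \<Rightarrow> ('v \<times> 'a) list \<Rightarrow> ('v \<times> 'a) list" where
  "proj z w xs = filter (\<lambda>y. fst y = z \<or> fst y = w) xs"

lemma filter_last:
  "filter P xs = ys @ [y] \<Longrightarrow> \<exists>a b. xs = a @ [y] @ b \<and> filter P b = []"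
proof (induction xs arbitrary: ys rule: rev_induct)
  case Nil then show ?case by simp
next
  case (snoc x xs)
  show ?case
  proof (cases "P x")
    case True
    then have "filter P xs @ [x] = ys @ [y]" using snoc.prems by simp
    then have "x = y" by simp
    then show ?thesis by (intro exI[of _ xs] exI[of _ "[]"]) simp
  next
    case False
    then have "filter P xs = ys @ [y]" using snoc.prems by simp
    then obtain a b where "xs = a @ [y] @ b" "filter P b = []" using snoc.IH by blast
    then show ?thesis using False by (intro exI[of _ a] exI[of _ "b @ [x]"]) simp
  qed
qed

lemma word_append[simp]: "gp_word M (x @ y) \<longleftrightarrow> gp_word M x \<and> gp_word M y"
  unfolding gp_word_def by auto
lemma word_Cons[simp]: "gp_word M (x # y) \<longleftrightarrow> snd x \<in> carrier (M (fst x)) \<and> gp_word M y"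
  unfolding gp_word_def by (cases x) auto
lemma word_rev[simp]: "gp_word M (rev w) = gp_word M w"
  unfolding gp_word_def by simp
lemma word_Nil[simp]: "gp_word M []"
  unfolding gp_word_def by auto

locale gpl =
  fixes E :: "'v \<Rightarrow> 'v \<Rightarrow> bool" and M :: "'v \<Rightarrow> ('a, 'b) monoid_scheme"
  assumes irrefl: "\<And>v. \<not> E v v" and symm: "\<And>u v. E u v \<Longrightarrow> E v u"
    and mon: "\<And>v. monoid (M v)"
begin

abbreviation gc where "gc \<equiv> gp_cong E M"

definition eqv where "eqv r r' \<longleftrightarrow> (\<forall>z w. \<not> E z w \<longrightarrow> proj z w r = proj z w r')"

definition adj where "adj s v \<longleftrightarrow> (\<forall>y\<in>set s. E (fst y) v)"

lemma eqv_refl[simp]: "eqv r r" unfolding eqv_def by simp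
lemma eqv_sym: "eqv r r' \<Longrightarrow> eqv r' r" unfolding eqv_def by simp
lemma eqv_trans: "eqv r r' \<Longrightarrow> eqv r' r'' \<Longrightarrow> eqv r r''" unfolding eqv_def by simp
lemma eqv_app: "eqv a b \<Longrightarrow> eqv c d \<Longrightarrow> eqv (a @ c) (b @ d)"
  unfolding eqv_def proj_def by simp

lemma PJ: "adj s v \<Longrightarrow> \<not> E z w \<Longrightarrow> v = z \<or> v = w \<Longrightarrow> proj z w s = []"
  unfolding adj_def proj_def filter_empty_conv using symm irrefl by blast

lemma adj_nov: "adj s v \<Longrightarrow> y \<in> set s \<Longrightarrow> fst y \<noteq> v"
  unfolding adj_def using irrefl by auto

lemma eqv_move: "adj s v \<Longrightarrow> eqv (s @ [(v, m)]) ((v, m) # s)"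
  unfolding eqv_def
proof (intro allI impI)
  fix z w assume "adj s v" "\<not> E z w"
  show "proj z w (s @ [(v, m)]) = proj z w ((v, m) # s)"
  proof (cases "v = z \<or> v = w")
    case True
    then have "proj z w s = []" using PJ \<open>adj s v\<close> \<open>\<not> E z w\<close> by blast
    then show ?thesis using True by (auto simp: proj_def)
  next
    case False then show ?thesis by (auto simp: proj_def)
  qed
qed

lemma cong_app_left: "gc u w \<Longrightarrow> gc (x @ u) (x @ w)"
  using gp_cong.compat[of E M u w x "[]"] by simp
lemma cong_app_right: "gc u w \<Longrightarrow> gc (u @ y) (w @ y)"
  using gp_cong.compat[of E M u w "[]" y] by simp

lemma cong_move:
  "gp_word M s \<Longrightarrow> adj s v \<Longrightarrow> m \<in> carrier (M v) \<Longrightarrow> gc (s @ [(v, m)]) ((v, m) # s)"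
proof (induction s)
  case Nil then show ?case by (simp add: gp_cong.refl)
next
  case (Cons y s)
  obtain u a where y: "y = (u, a)" by (cases y)
  have "adj s v" using Cons.prems unfolding adj_def by auto
  then have 1: "gc (s @ [(v, m)]) ((v, m) # s)" using Cons by simp
  have 2: "gc ([y] @ (s @ [(v, m)])) ([y] @ ((v, m) # s))" by (rule cong_app_left[OF 1])
  have "E u v" using Cons.prems y unfolding adj_def by auto
  moreover have "a \<in> carrier (M u)" using Cons.prems y by simp
  ultimately have "gc [(u, a), (v, m)] [(v, m), (u, a)]" using Cons.prems(3) by (rule gp_cong.comm)
  then have 3: "gc ([(u, a), (v, m)] @ s) ([(v, m), (u, a)] @ s)" by (rule cong_app_right)
  show ?case using gp_cong.trans[OF 2] 3 y by simp
qed

lemma word_pres: "gc u w \<Longrightarrow> gp_word M u = gp_word M w"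
proof (induction rule: gp_cong.induct)
  case (mult a v b) then show ?case using monoid.m_closed[OF mon] by simp
next
  case (one v) then show ?case using monoid.one_closed[OF mon] by simp
qed auto

lemma eqv_imp_cong: "gp_word M r \<Longrightarrow> gp_word M r' \<Longrightarrow> eqv r r' \<Longrightarrow> gc r r'"
proof (induction r arbitrary: r' rule: rev_induct)
  case Nil
  have "r' = []"
  proof (rule ccontr)
    assume "r' \<noteq> []"
    then obtain y where y: "y \<in> set r'" by (cases r') auto
    have "proj (fst y) (fst y) r' \<noteq> []" using y unfolding proj_def by (auto simp: filter_empty_conv)
    moreover have "proj (fst y) (fst y) r' = []" using Nil.prems(3) irrefl unfolding eqv_def
      by (metis filter.simps(1) proj_def)
    ultimately show False by simp
  qed
  then show ?case by (simp add: gp_cong.refl)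
next
  case (snoc x q)
  obtain v a where x: "x = (v, a)" by (cases x)
  have e: "eqv (q @ [(v, a)]) r'" using snoc.prems x by simp
  have "proj v v r' = proj v v (q @ [(v, a)])"
    using e irrefl unfolding eqv_def by metis
  then have "proj v v r' = proj v v q @ [(v, a)]" unfolding proj_def by simp
  then obtain p s where r': "r' = p @ [(v, a)] @ s" and fs: "proj v v s = []"
    unfolding proj_def using filter_last by metis
  have adj: "adj s v" unfolding adj_def
  proof
    fix y assume ys: "y \<in> set s"
    have yv: "fst y \<noteq> v" using fs ys unfolding proj_def by (auto simp: filter_empty_conv)
    show "E (fst y) v"
    proof (rule ccontr)
      assume ne: "\<not> E (fst y) v"
      let ?z = "fst y"
      have "proj ?z v (q @ [(v, a)]) = proj ?z v r'" using e ne unfolding eqv_def by blast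
      then have eq: "proj ?z v q @ [(v, a)] = proj ?z v p @ [(v, a)] @ proj ?z v s"
        using r' unfolding proj_def by simp
      have ne2: "proj ?z v s \<noteq> []" using ys unfolding proj_def by (auto simp: filter_empty_conv)
      have "last (proj ?z v s) \<in> set (proj ?z v s)" using ne2 by simp
      then have "fst (last (proj ?z v s)) \<noteq> v" using fs unfolding proj_def
        by (auto simp: filter_empty_conv)
      moreover have "last (proj ?z v s) = (v, a)" using eq ne2
        by (metis append_assoc last_appendR last_snoc)
      ultimately show False by simp
    qed
  qed
  have "eqv q (p @ s)" unfolding eqv_def
  proof (intro allI impI)
    fix z w assume zw: "\<not> E z w"
    have h: "proj z w (q @ [(v, a)]) = proj z w r'" using e zw unfolding eqv_def by blast
    show "proj z w q = proj z w (p @ s)"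
    proof (cases "v = z \<or> v = w")
      case True
      then have "proj z w s = []" using PJ adj zw by blast
      then show ?thesis using h True r' unfolding proj_def by auto
    next
      case False
      then show ?thesis using h r' unfolding proj_def by auto
    qed
  qed
  moreover have "gp_word M q" "gp_word M (p @ s)" "a \<in> carrier (M v)"
    using snoc.prems r' x by auto
  ultimately have "gc q (p @ s)" using snoc.IH by blast
  then have 1: "gc (q @ [(v, a)]) (p @ s @ [(v, a)])" using cong_app_right by fastforce
  have "gc (s @ [(v, a)]) ((v, a) # s)" using cong_move adj snoc.prems r' \<open>a \<in> carrier (M v)\<close> by simp
  then have "gc (p @ s @ [(v, a)]) (p @ (v, a) # s)" using cong_app_left by blast
  then show ?case using gp_cong.trans[OF 1] r' x by simp
qed


fun splt :: "'v \<Rightarrow> ('v \<times> 'a) list \<Rightarrow> (('v \<times> 'a) list \<times> 'a \<times> ('v \<times> 'a) list) option" where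
  "splt v [] = None"
| "splt v (x # xs) = (case splt v xs of Some (p, a, s) \<Rightarrow> Some (x # p, a, s)
     | None \<Rightarrow> (if fst x = v \<and> (\<forall>y\<in>set xs. E (fst y) v) then Some ([], snd x, xs) else None))"

lemma splt_sound: "splt v r = Some (p, a, s) \<Longrightarrow> r = p @ [(v, a)] @ s \<and> adj s v"
proof (induction r arbitrary: p a s)
  case Nil then show ?case by simp
next
  case (Cons x xs)
  show ?case
  proof (cases "splt v xs")
    case None
    then show ?thesis using Cons.prems unfolding adj_def by (cases x) (auto split: if_splits)
  next
    case (Some t)
    obtain p' a' s' where t: "t = (p', a', s')" by (cases t)
    then show ?thesis using Cons Some by auto
  qed
qed

lemma splt_nov: "(\<forall>y\<in>set s. fst y \<noteq> v) \<Longrightarrow> splt v s = None"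
  by (induction s) auto

lemma splt_complete: "adj s v \<Longrightarrow> splt v (p @ [(v, c)] @ s) = Some (p, c, s)"
proof (induction p)
  case Nil
  have "splt v s = None" using splt_nov adj_nov Nil by blast
  then show ?case using Nil unfolding adj_def by simp
next
  case (Cons x p) then show ?case by simp
qed

definition T where "T v vs \<longleftrightarrow> (\<exists>p s. vs = p @ [v] @ s \<and> (\<forall>z\<in>set s. E z v))"

lemma splt_None_iff: "splt v r = None \<longleftrightarrow> \<not> T v (map fst r)"
proof
  assume n: "splt v r = None"
  show "\<not> T v (map fst r)"
  proof
    assume "T v (map fst r)"
    then obtain p s where ps: "map fst r = p @ [v] @ s" "\<forall>z\<in>set s. E z v" unfolding T_def by blast
    then obtain r1 r2 where "r = r1 @ r2" "map fst r2 = v # s" by (auto simp: map_eq_append_conv)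
    moreover then obtain c r3 where "r2 = (v, c) # r3" "map fst r3 = s" by (cases r2) auto
    ultimately have "r = r1 @ [(v, c)] @ r3" "adj r3 v" using ps unfolding adj_def by (auto, metis fst_conv imageI set_map)
    then show False using splt_complete n by simp
  qed
next
  assume "\<not> T v (map fst r)"
  show "splt v r = None"
  proof (rule ccontr)
    assume "splt v r \<noteq> None"
    then obtain p a s where "splt v r = Some (p, a, s)" by auto
    then have "r = p @ [(v, a)] @ s" "adj s v" using splt_sound by auto
    then have "T v (map fst r)" unfolding T_def adj_def by (intro exI[of _ "map fst p"] exI[of _ "map fst s"]) auto
    then show False using \<open>\<not> T v (map fst r)\<close> by simp
  qed
qed

lemma T_ins: assumes "E w v" shows "T v (P @ [w] @ S) \<longleftrightarrow> T v (P @ S)"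
proof
  have wv: "w \<noteq> v" using assms irrefl by auto
  assume "T v (P @ [w] @ S)"
  then obtain p s where ps: "P @ [w] @ S = p @ [v] @ s" "\<forall>z\<in>set s. E z v" unfolding T_def by blast
  then obtain us where "(P = p @ us \<and> us @ [w] @ S = [v] @ s) \<or> (P @ us = p \<and> [w] @ S = us @ [v] @ s)"
    by (auto simp: append_eq_append_conv2)
  then show "T v (P @ S)"
  proof
    assume h: "P = p @ us \<and> us @ [w] @ S = [v] @ s"
    then obtain us' where "us = v # us'" using wv by (cases us) auto
    then have "P @ S = p @ [v] @ (us' @ S)" "set (us' @ S) \<subseteq> set s" using h by auto
    then show ?thesis unfolding T_def using ps(2) by blast
  next
    assume h: "P @ us = p \<and> [w] @ S = us @ [v] @ s"
    then obtain us' where "us = w # us'" using wv by (cases us) auto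
    then have "P @ S = (P @ us') @ [v] @ s" using h by auto
    then show ?thesis unfolding T_def using ps(2) by blast
  qed
next
  assume "T v (P @ S)"
  then obtain p s where ps: "P @ S = p @ [v] @ s" "\<forall>z\<in>set s. E z v" unfolding T_def by blast
  then obtain us where "(P = p @ us \<and> us @ S = [v] @ s) \<or> (P @ us = p \<and> S = us @ [v] @ s)"
    by (auto simp: append_eq_append_conv2)
  then show "T v (P @ [w] @ S)"
  proof
    assume h: "P = p @ us \<and> us @ S = [v] @ s"
    show ?thesis
    proof (cases us)
      case Nil
      then have "P @ [w] @ S = (p @ [w]) @ [v] @ s" using h by auto
      then show ?thesis unfolding T_def using ps(2) by blast
    next
      case (Cons x us')
      then have "P @ [w] @ S = p @ [v] @ (us' @ [w] @ S)" "s = us' @ S" using h by auto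
      then show ?thesis unfolding T_def using ps(2) assms by (intro exI[of _ p] exI[of _ "us' @ [w] @ S"]) auto
    qed
  next
    assume h: "P @ us = p \<and> S = us @ [v] @ s"
    then have "P @ [w] @ S = (P @ [w] @ us) @ [v] @ s" by auto
    then show ?thesis unfolding T_def using ps(2) by blast
  qed
qed

definition vred where
  "vred vs \<longleftrightarrow> \<not> (\<exists>v p q s. vs = p @ [v] @ q @ [v] @ s \<and> (\<forall>z\<in>set q. E z v))"

lemma vred_snoc: assumes "vred vs" "\<not> T u vs" shows "vred (vs @ [u])"
  unfolding vred_def
proof
  assume "\<exists>v p q s. vs @ [u] = p @ [v] @ q @ [v] @ s \<and> (\<forall>z\<in>set q. E z v)"
  then obtain v p q s where h: "vs @ [u] = p @ [v] @ q @ [v] @ s" "\<forall>z\<in>set q. E z v" by blast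
  show False
  proof (cases s rule: rev_exhaust)
    case Nil
    then have "vs = p @ [v] @ q" "u = v" using h by auto
    then show False using assms(2) h(2) unfolding T_def by blast
  next
    case (snoc s' x)
    then have "vs = p @ [v] @ q @ [v] @ s'" using h by auto
    then show False using assms(1) h(2) unfolding vred_def by blast
  qed
qed

lemma vred_del: assumes "vred (P @ [u] @ S)" "\<forall>z\<in>set S. E z u" shows "vred (P @ S)"
  unfolding vred_def
proof
  assume "\<exists>v p q s. P @ S = p @ [v] @ q @ [v] @ s \<and> (\<forall>z\<in>set q. E z v)"
  then obtain v p q s where h: "P @ S = (p @ [v] @ q @ [v]) @ s" and q: "\<forall>z\<in>set q. E z v" by auto
  have viol: "\<And>p q s. P @ [u] @ S = p @ [v] @ q @ [v] @ s \<Longrightarrow> \<forall>z\<in>set q. E z v \<Longrightarrow> False"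
    using assms(1) unfolding vred_def by blast
  obtain us where "(P = (p @ [v] @ q @ [v]) @ us \<and> us @ S = s) \<or> (P @ us = p @ [v] @ q @ [v] \<and> S = us @ s)"
    using append_eq_append_conv2[THEN iffD1, OF h] by blast
  then show False
  proof
    assume "P = (p @ [v] @ q @ [v]) @ us \<and> us @ S = s"
    then show False using viol[of p q "us @ [u] @ S"] q by auto
  next
    assume h2: "P @ us = p @ [v] @ q @ [v] \<and> S = us @ s"
    show False
    proof (cases us rule: rev_exhaust)
      case Nil
      then show False using viol[of p q "[u] @ S"] q h2 by auto
    next
      case (snoc us' x)
      then have x: "x = v" and h3: "P @ us' = p @ ([v] @ q)" using h2 by auto
      obtain ws where "(P = p @ ws \<and> ws @ us' = [v] @ q) \<or> (P @ ws = p \<and> us' = ws @ [v] @ q)"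
        using h3 by (auto simp: append_eq_append_conv2)
      then show False
      proof
        assume h4: "P @ ws = p \<and> us' = ws @ [v] @ q"
        then have "P @ [u] @ S = (P @ [u] @ ws) @ [v] @ q @ [v] @ s" using h2 snoc x by auto
        then show False using viol q by (metis append_assoc)
      next
        assume h4: "P = p @ ws \<and> ws @ us' = [v] @ q"
        show False
        proof (cases ws)
          case Nil
          then have "P @ [u] @ S = (p @ [u]) @ [v] @ q @ [v] @ s" using h2 h4 snoc x by auto
          then show False using viol q by (metis append_assoc)
        next
          case (Cons y ws')
          then have y: "y = v" and qq: "q = ws' @ us'" using h4 by auto
          have "v \<in> set S" using h2 snoc x by auto
          then have "E v u" using assms(2) by auto
          then have Euv: "E u v" using symm by blast
          have "P @ [u] @ S = p @ [v] @ (ws' @ [u] @ us') @ [v] @ s"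
            using h2 h4 snoc x Cons y by auto
          moreover have "\<forall>z\<in>set (ws' @ [u] @ us'). E z v" using q qq Euv by auto
          ultimately show False using viol by blast
        qed
      qed
    qed
  qed
qed

lemma vred_splt: assumes "vred (map fst r)" "splt v r = Some (p, c, s)" shows "splt v (p @ s) = None"
proof (rule ccontr)
  assume "splt v (p @ s) \<noteq> None"
  then have "T v (map fst p @ map fst s)" using splt_None_iff by simp
  then obtain P S where PS: "map fst p @ map fst s = P @ [v] @ S" "\<forall>z\<in>set S. E z v"
    unfolding T_def by blast
  have r: "r = p @ [(v, c)] @ s" "adj s v" using splt_sound assms(2) by auto
  have nv: "v \<notin> set (map fst s)" using adj_nov[OF r(2)] by auto
  obtain us where "(map fst p = P @ us \<and> us @ map fst s = [v] @ S) \<or> (map fst p @ us = P \<and> map fst s = us @ [v] @ S)"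
    using PS(1) by (auto simp: append_eq_append_conv2)
  then show False
  proof
    assume "map fst p @ us = P \<and> map fst s = us @ [v] @ S"
    then show False using nv by auto
  next
    assume h: "map fst p = P @ us \<and> us @ map fst s = [v] @ S"
    then obtain us' where us: "us = v # us'" using nv by (cases us) auto
    then have "map fst r = P @ [v] @ us' @ [v] @ map fst s" using h r by auto
    moreover have "\<forall>z\<in>set us'. E z v" using h us PS(2) by auto
    ultimately show False using assms(1) unfolding vred_def by blast
  qed
qed


lemma splt_complete': "r = p @ [(v, c)] @ s \<Longrightarrow> adj s v \<Longrightarrow> splt v r = Some (p, c, s)"
  using splt_complete by simp

definition push :: "('v \<times> 'a) list \<Rightarrow> 'v \<times> 'a \<Rightarrow> ('v \<times> 'a) list" where
"push r l = (case l of (v, m) \<Rightarrow> (case splt v r of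
   Some (p, a, s) \<Rightarrow> (if a \<otimes>\<^bsub>M v\<^esub> m = \<one>\<^bsub>M v\<^esub> then p @ s else p @ [(v, a \<otimes>\<^bsub>M v\<^esub> m)] @ s)
 | None \<Rightarrow> (if m = \<one>\<^bsub>M v\<^esub> then r else r @ [(v, m)])))"

lemma push_Some: "splt v r = Some (p, a, s) \<Longrightarrow>
  push r (v, m) = (if a \<otimes>\<^bsub>M v\<^esub> m = \<one>\<^bsub>M v\<^esub> then p @ s else p @ [(v, a \<otimes>\<^bsub>M v\<^esub> m)] @ s)"
  unfolding push_def by simp

lemma push_None: "splt v r = None \<Longrightarrow> push r (v, m) = (if m = \<one>\<^bsub>M v\<^esub> then r else r @ [(v, m)])"
  unfolding push_def by simp

definition nid where "nid r \<longleftrightarrow> (\<forall>y\<in>set r. snd y \<noteq> \<one>\<^bsub>M (fst y)\<^esub>)"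
definition good where "good r \<longleftrightarrow> gp_word M r \<and> nid r \<and> vred (map fst r)"

lemma push_good: assumes "good r" "m \<in> carrier (M v)" shows "good (push r (v, m))"
proof (cases "splt v r")
  case None
  then have "\<not> T v (map fst r)" using splt_None_iff by simp
  then have "vred (map fst r @ [v])" using vred_snoc assms(1) unfolding good_def by blast
  then show ?thesis using assms None unfolding push_None[OF None] good_def nid_def by auto
next
  case (Some t)
  then obtain p a s where S: "splt v r = Some (p, a, s)" by (cases t) auto
  then have r: "r = p @ [(v, a)] @ s" "adj s v" using splt_sound by auto
  have a: "a \<in> carrier (M v)" using assms(1) r unfolding good_def by simp
  show ?thesis
  proof (cases "a \<otimes>\<^bsub>M v\<^esub> m = \<one>\<^bsub>M v\<^esub>")
    case True
    have "vred (map fst p @ [v] @ map fst s)" using assms r unfolding good_def by simp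
    then have "vred (map fst p @ map fst s)" by (rule vred_del) (use r(2) in \<open>auto simp: adj_def\<close>)
    then show ?thesis using assms r True unfolding push_Some[OF S] good_def nid_def by auto
  next
    case False
    have "a \<otimes>\<^bsub>M v\<^esub> m \<in> carrier (M v)" using a assms monoid.m_closed[OF mon] by blast
    then show ?thesis using assms r False unfolding push_Some[OF S] good_def nid_def by auto
  qed
qed

lemma push_cong: assumes "gp_word M r" "m \<in> carrier (M v)" shows "gc (r @ [(v, m)]) (push r (v, m))"
proof (cases "splt v r")
  case None
  have "gc (r @ [(v, \<one>\<^bsub>M v\<^esub>)]) (r @ [])" by (rule cong_app_left) (rule gp_cong.one)
  then show ?thesis unfolding push_None[OF None] by (auto intro: gp_cong.refl)
next
  case (Some t)
  then obtain p a s where S: "splt v r = Some (p, a, s)" by (cases t) auto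
  then have r: "r = p @ [(v, a)] @ s" "adj s v" using splt_sound by auto
  have a: "a \<in> carrier (M v)" using assms r by simp
  have "gc (s @ [(v, m)]) ((v, m) # s)" using cong_move assms r by simp
  then have 1: "gc (r @ [(v, m)]) (p @ [(v, a)] @ [(v, m)] @ s)"
    using cong_app_left[of _ _ "p @ [(v, a)]"] r by simp
  have "gc [(v, a), (v, m)] [(v, a \<otimes>\<^bsub>M v\<^esub> m)]" by (rule gp_cong.mult[where E=E and M=M and v=v, OF a assms(2)])
  then have "gc (p @ [(v, a), (v, m)] @ s) (p @ [(v, a \<otimes>\<^bsub>M v\<^esub> m)] @ s)" by (rule gp_cong.compat)
  then have 2: "gc (r @ [(v, m)]) (p @ [(v, a \<otimes>\<^bsub>M v\<^esub> m)] @ s)" using gp_cong.trans[OF 1] by simp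
  show ?thesis
  proof (cases "a \<otimes>\<^bsub>M v\<^esub> m = \<one>\<^bsub>M v\<^esub>")
    case True
    have "gc (p @ [(v, \<one>\<^bsub>M v\<^esub>)] @ s) (p @ [] @ s)" by (rule gp_cong.compat) (rule gp_cong.one)
    then show ?thesis using gp_cong.trans[OF 2] True unfolding push_Some[OF S] by simp
  next
    case False then show ?thesis using 2 unfolding push_Some[OF S] by simp
  qed
qed

lemma tv: assumes "eqv R R'" "splt v R = Some (p, c, s)" shows "\<exists>p' s'. splt v R' = Some (p', c, s')"
proof -
  have R: "R = p @ [(v, c)] @ s" "adj s v" using splt_sound assms(2) by auto
  have "proj v v s = []" using PJ R(2) irrefl by blast
  then have "proj v v R = proj v v p @ [(v, c)]" using R unfolding proj_def by simp
  moreover have "proj v v R = proj v v R'" using assms(1) irrefl unfolding eqv_def by blast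
  ultimately obtain p' s' where R': "R' = p' @ [(v, c)] @ s'" and fs: "proj v v s' = []"
    unfolding proj_def using filter_last by metis
  have "adj s' v" unfolding adj_def
  proof
    fix y assume ys: "y \<in> set s'"
    have yv: "fst y \<noteq> v" using fs ys unfolding proj_def by (auto simp: filter_empty_conv)
    show "E (fst y) v"
    proof (rule ccontr)
      assume ne: "\<not> E (fst y) v"
      let ?z = "fst y"
      have "proj ?z v s = []" using PJ R(2) ne by blast
      moreover have "proj ?z v R = proj ?z v R'" using assms(1) ne unfolding eqv_def by blast
      ultimately have eq: "proj ?z v p @ [(v, c)] = proj ?z v p' @ [(v, c)] @ proj ?z v s'"
        using R R' unfolding proj_def by simp
      have ne2: "proj ?z v s' \<noteq> []" using ys unfolding proj_def by (auto simp: filter_empty_conv)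
      have "last (proj ?z v s') \<in> set (proj ?z v s')" using ne2 by simp
      then have "fst (last (proj ?z v s')) \<noteq> v" using fs unfolding proj_def
        by (auto simp: filter_empty_conv)
      moreover have "last (proj ?z v s') = (v, c)" using eq ne2
        by (metis append_assoc last_appendR last_snoc)
      ultimately show False by simp
    qed
  qed
  then show ?thesis using splt_complete' R' by blast
qed

lemma tv_None: "eqv R R' \<Longrightarrow> splt v R = None \<Longrightarrow> splt v R' = None"
  using tv[OF eqv_sym] by (metis not_None_eq prod_cases3)

lemma Qgen:
  assumes "adj s v" "adj s' v"
    and "\<And>z w. \<not> E z w \<Longrightarrow> v = z \<or> v = w \<Longrightarrow> proj z w (p @ X) = proj z w (p' @ X') \<Longrightarrow> proj z w (p @ Y) = proj z w (p' @ Y')"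
    and "\<And>z w. \<not> E z w \<Longrightarrow> \<not>(v = z \<or> v = w) \<Longrightarrow> proj z w X = [] \<and> proj z w X' = [] \<and> proj z w Y = [] \<and> proj z w Y' = []"
    and "eqv (p @ X @ s) (p' @ X' @ s')"
  shows "eqv (p @ Y @ s) (p' @ Y' @ s')"
  unfolding eqv_def
proof (intro allI impI)
  fix z w assume zw: "\<not> E z w"
  have h: "proj z w (p @ X @ s) = proj z w (p' @ X' @ s')" using assms(5) zw unfolding eqv_def by blast
  show "proj z w (p @ Y @ s) = proj z w (p' @ Y' @ s')"
  proof (cases "v = z \<or> v = w")
    case True
    then have "proj z w s = []" "proj z w s' = []" using PJ assms(1,2) zw by blast+
    then show ?thesis using h assms(3)[OF zw True] unfolding proj_def by simp
  next
    case False
    then show ?thesis using h assms(4)[OF zw False] unfolding proj_def by simp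
  qed
qed

lemma Q: "adj s v \<Longrightarrow> adj s' v \<Longrightarrow> eqv (p @ [(v, c)] @ s) (p' @ [(v, c')] @ s') \<Longrightarrow> eqv (p @ [(v, a)] @ s) (p' @ [(v, a)] @ s')"
  using Qgen[of s v s' p "[(v, c)]" p' "[(v, c')]" "[(v, a)]" "[(v, a)]"] by (auto simp: proj_def)

lemma Q3: "adj s v \<Longrightarrow> adj s' v \<Longrightarrow> eqv (p @ [(v, c)] @ s) (p' @ [(v, c')] @ s') \<Longrightarrow> eqv (p @ s) (p' @ s')"
  using Qgen[of s v s' p "[(v, c)]" p' "[(v, c')]" "[]" "[]"] by (auto simp: proj_def)

lemma Q2: "adj s v \<Longrightarrow> adj s' v \<Longrightarrow> eqv (p @ s) (p' @ s') \<Longrightarrow> eqv (p @ [(v, a)] @ s) (p' @ [(v, a)] @ s')"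
  using Qgen[of s v s' p "[]" p' "[]" "[(v, a)]" "[(v, a)]"] by (auto simp: proj_def)

lemma push_eqv: assumes "eqv q q'" shows "eqv (push q (v, m)) (push q' (v, m))"
proof (cases "splt v q")
  case None
  then have N: "splt v q' = None" using tv_None assms by blast
  have "eqv (q @ [(v, m)]) (q' @ [(v, m)])" using eqv_app[OF assms eqv_refl] .
  then show ?thesis unfolding push_None[OF None] push_None[OF N] using assms by auto
next
  case (Some t)
  then obtain p c s where S: "splt v q = Some (p, c, s)" by (cases t) auto
  then obtain p' s' where S': "splt v q' = Some (p', c, s')" using tv assms by blast
  have q: "q = p @ [(v, c)] @ s" "adj s v" using splt_sound S by auto
  have q': "q' = p' @ [(v, c)] @ s'" "adj s' v" using splt_sound S' by auto
  show ?thesis unfolding push_Some[OF S] push_Some[OF S']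
    using Q[OF q(2) q'(2)] Q3[OF q(2) q'(2)] assms q q' by auto
qed


lemma push_one: assumes "good r" shows "push r (v, \<one>\<^bsub>M v\<^esub>) = r"
proof (cases "splt v r")
  case None then show ?thesis unfolding push_None[OF None] by simp
next
  case (Some t)
  then obtain p a s where S: "splt v r = Some (p, a, s)" by (cases t) auto
  then have r: "r = p @ [(v, a)] @ s" "adj s v" using splt_sound by auto
  have a: "a \<in> carrier (M v)" "a \<noteq> \<one>\<^bsub>M v\<^esub>" using assms r unfolding good_def nid_def by auto
  then have "a \<otimes>\<^bsub>M v\<^esub> \<one>\<^bsub>M v\<^esub> = a" using monoid.r_one[OF mon] by blast
  then show ?thesis unfolding push_Some[OF S] using a r by simp
qed

lemma push_mult: assumes "good r" "a \<in> carrier (M v)" "b \<in> carrier (M v)"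
  shows "eqv (push (push r (v, a)) (v, b)) (push r (v, a \<otimes>\<^bsub>M v\<^esub> b))"
proof (cases "splt v r")
  case None
  show ?thesis
  proof (cases "a = \<one>\<^bsub>M v\<^esub>")
    case True
    then have "a \<otimes>\<^bsub>M v\<^esub> b = b" using monoid.l_one[OF mon] assms by blast
    then show ?thesis using True eqv_refl by (simp add: push_None[OF None])
  next
    case False
    have S: "splt v (r @ [(v, a)]) = Some (r, a, [])" by (rule splt_complete') (auto simp: adj_def)
    have "push r (v, a) = r @ [(v, a)]" using push_None[OF None] False by simp
    then show ?thesis using push_Some[OF S] push_None[OF None] False by simp
  qed
next
  case (Some t)
  then obtain p c s where S: "splt v r = Some (p, c, s)" by (cases t) auto
  then have r: "r = p @ [(v, c)] @ s" "adj s v" using splt_sound by auto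
  have c: "c \<in> carrier (M v)" using assms r unfolding good_def by auto
  have assoc: "c \<otimes>\<^bsub>M v\<^esub> (a \<otimes>\<^bsub>M v\<^esub> b) = (c \<otimes>\<^bsub>M v\<^esub> a) \<otimes>\<^bsub>M v\<^esub> b"
    using monoid.m_assoc[OF mon] c assms by metis
  show ?thesis
  proof (cases "c \<otimes>\<^bsub>M v\<^esub> a = \<one>\<^bsub>M v\<^esub>")
    case True
    have N: "splt v (p @ s) = None" using vred_splt assms(1) S unfolding good_def by blast
    have cab: "c \<otimes>\<^bsub>M v\<^esub> (a \<otimes>\<^bsub>M v\<^esub> b) = b" using assoc True monoid.l_one[OF mon] assms by metis
    have m: "eqv (p @ s @ [(v, b)]) (p @ [(v, b)] @ s)"
      using eqv_app[OF eqv_refl eqv_move[OF r(2)]] by simp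
    have "push r (v, a) = p @ s" using push_Some[OF S] True by simp
    then show ?thesis using push_Some[OF S] push_None[OF N] True cab m by simp
  next
    case False
    have S2: "splt v (p @ [(v, c \<otimes>\<^bsub>M v\<^esub> a)] @ s) = Some (p, c \<otimes>\<^bsub>M v\<^esub> a, s)"
      by (rule splt_complete') (use r in auto)
    show ?thesis unfolding push_Some[OF S] using False push_Some[OF S2] assoc eqv_refl by simp
  qed
qed

lemma eqv_swap: assumes "E u v" shows "eqv [(u, a), (v, b)] [(v, b), (u, a)]"
  unfolding eqv_def proj_def
proof (intro allI impI)
  fix z w assume "\<not> E z w"
  then have "\<not> ((u = z \<or> u = w) \<and> (v = z \<or> v = w))" using assms symm irrefl by metis
  then show "filter (\<lambda>y. fst y = z \<or> fst y = w) [(u, a), (v, b)] = filter (\<lambda>y. fst y = z \<or> fst y = w) [(v, b), (u, a)]"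
    by auto
qed

lemma T_push: assumes "E u v" shows "T v (map fst (push r (u, a))) \<longleftrightarrow> T v (map fst r)"
proof (cases "splt u r")
  case None
  have "T v (map fst r @ [u] @ []) \<longleftrightarrow> T v (map fst r @ [])" by (rule T_ins[OF assms])
  then show ?thesis unfolding push_None[OF None] by simp
next
  case (Some t)
  then obtain p c s where S: "splt u r = Some (p, c, s)" by (cases t) auto
  then have r: "r = p @ [(u, c)] @ s" "adj s u" using splt_sound by auto
  have "T v (map fst p @ [u] @ map fst s) \<longleftrightarrow> T v (map fst p @ map fst s)" by (rule T_ins[OF assms])
  then show ?thesis unfolding push_Some[OF S] using r by simp
qed

lemma splt_push_None: "E u v \<Longrightarrow> splt v (push r (u, a)) = None \<longleftrightarrow> splt v r = None"
  using T_push splt_None_iff by simp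

lemma splt_snoc: assumes "E w u"
  shows "splt u (r @ [(w, b)]) = map_option (\<lambda>(p, c, s). (p, c, s @ [(w, b)])) (splt u r)"
proof (cases "splt u r")
  case None
  then have "\<not> T u (map fst r)" using splt_None_iff by simp
  moreover have "T u (map fst r @ [w] @ []) \<longleftrightarrow> T u (map fst r @ [])" by (rule T_ins[OF assms])
  ultimately have "splt u (r @ [(w, b)]) = None" using splt_None_iff by simp
  then show ?thesis using None by simp
next
  case (Some t)
  then obtain p c s where S: "splt u r = Some (p, c, s)" by (cases t) auto
  then have r: "r = p @ [(u, c)] @ s" "adj s u" using splt_sound by auto
  have "splt u (r @ [(w, b)]) = Some (p, c, s @ [(w, b)])"
    by (rule splt_complete') (use r assms in \<open>auto simp: adj_def\<close>)
  then show ?thesis using S by simp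
qed

lemma comm_aux1: assumes "E u v" "splt v r = None"
  shows "eqv (push (push r (u, a)) (v, b)) (push (push r (v, b)) (u, a))"
proof -
  have N: "splt v (push r (u, a)) = None" using splt_push_None assms by blast
  have Evu: "E v u" using symm assms by blast
  show ?thesis
  proof (cases "b = \<one>\<^bsub>M v\<^esub>")
    case True then show ?thesis unfolding push_None[OF N] push_None[OF assms(2)] using eqv_refl by simp
  next
    case False
    have L: "push (push r (u, a)) (v, b) = push r (u, a) @ [(v, b)]" unfolding push_None[OF N] using False by simp
    have R: "push (push r (v, b)) (u, a) = push (r @ [(v, b)]) (u, a)" unfolding push_None[OF assms(2)] using False by simp
    show ?thesis
    proof (cases "splt u r")
      case None
      have N2: "splt u (r @ [(v, b)]) = None" using splt_snoc[OF Evu] None by simp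
      have "eqv (r @ [(u, a), (v, b)]) (r @ [(v, b), (u, a)])" using eqv_app[OF eqv_refl eqv_swap[OF assms(1)]] .
      moreover have "push (push r (u, a)) (v, b) = (if a = \<one>\<^bsub>M u\<^esub> then r else r @ [(u, a)]) @ [(v, b)]"
        using L push_None[OF None] by simp
      moreover have "push (push r (v, b)) (u, a) = (if a = \<one>\<^bsub>M u\<^esub> then r @ [(v, b)] else r @ [(v, b)] @ [(u, a)])"
        using R push_None[OF N2] by simp
      ultimately show ?thesis using eqv_refl by simp
    next
      case (Some t)
      then obtain p c s where S: "splt u r = Some (p, c, s)" by (cases t) auto
      have S2: "splt u (r @ [(v, b)]) = Some (p, c, s @ [(v, b)])" using splt_snoc[OF Evu] S by simp
      show ?thesis using L R push_Some[OF S] push_Some[OF S2] by simp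
    qed
  qed
qed

lemma comm_ord: assumes "E u v" "r = A @ [(u, c)] @ B @ [(v, d)] @ C"
  "adj (B @ [(v, d)] @ C) u" "adj C v"
  shows "push (push r (u, a)) (v, b) = push (push r (v, b)) (u, a)"
proof -
  have Su: "splt u r = Some (A, c, B @ [(v, d)] @ C)" by (rule splt_complete') (use assms in auto)
  have Sv: "splt v r = Some (A @ [(u, c)] @ B, d, C)" by (rule splt_complete') (use assms in auto)
  define X where "X = (if c \<otimes>\<^bsub>M u\<^esub> a = \<one>\<^bsub>M u\<^esub> then [] else [(u, c \<otimes>\<^bsub>M u\<^esub> a)])"
  define Y where "Y = (if d \<otimes>\<^bsub>M v\<^esub> b = \<one>\<^bsub>M v\<^esub> then [] else [(v, d \<otimes>\<^bsub>M v\<^esub> b)])"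
  have 1: "push r (u, a) = A @ X @ B @ [(v, d)] @ C" unfolding push_Some[OF Su] X_def by simp
  have S1: "splt v (A @ X @ B @ [(v, d)] @ C) = Some (A @ X @ B, d, C)" by (rule splt_complete') (use assms in auto)
  have 2: "push (A @ X @ B @ [(v, d)] @ C) (v, b) = A @ X @ B @ Y @ C" unfolding push_Some[OF S1] Y_def by simp
  have 3: "push r (v, b) = A @ [(u, c)] @ B @ Y @ C" unfolding push_Some[OF Sv] Y_def by simp
  have "adj (B @ Y @ C) u" using assms(1,3) symm unfolding adj_def Y_def by auto
  then have S3: "splt u (A @ [(u, c)] @ B @ Y @ C) = Some (A, c, B @ Y @ C)" by (intro splt_complete') auto
  have 4: "push (A @ [(u, c)] @ B @ Y @ C) (u, a) = A @ X @ B @ Y @ C" unfolding push_Some[OF S3] X_def by simp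
  show ?thesis using 1 2 3 4 by simp
qed

lemma push_comm: assumes "E u v"
  shows "eqv (push (push r (u, a)) (v, b)) (push (push r (v, b)) (u, a))"
proof (cases "splt v r")
  case None then show ?thesis using comm_aux1 assms by blast
next
  case (Some t)
  then obtain p' d s' where Sv: "splt v r = Some (p', d, s')" by (cases t) auto
  have Evu: "E v u" using symm assms by blast
  show ?thesis
  proof (cases "splt u r")
    case None then show ?thesis using comm_aux1[OF Evu] eqv_sym by blast
  next
    case (Some t2)
    then obtain p c s where Su: "splt u r = Some (p, c, s)" by (cases t2) auto
    have r: "r = p @ [(u, c)] @ s" "adj s u" using splt_sound Su by auto
    have r': "r = p' @ [(v, d)] @ s'" "adj s' v" using splt_sound Sv by auto
    have uv: "u \<noteq> v" using assms irrefl by blast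
    have "p @ ((u, c) # s) = p' @ ((v, d) # s')" using r r' by simp
    then obtain us where "(p = p' @ us \<and> us @ (u, c) # s = (v, d) # s') \<or> (p @ us = p' \<and> (u, c) # s = us @ (v, d) # s')"
      using append_eq_append_conv2[THEN iffD1] by blast
    then show ?thesis
    proof
      assume h: "p = p' @ us \<and> us @ (u, c) # s = (v, d) # s'"
      then obtain us' where us: "us = (v, d) # us'" using uv by (cases us) auto
      then have "r = p' @ [(v, d)] @ us' @ [(u, c)] @ s" using h r by simp
      moreover have "s' = us' @ [(u, c)] @ s" using h us by simp
      ultimately have "push (push r (v, b)) (u, a) = push (push r (u, a)) (v, b)"
        using comm_ord[OF Evu, of r p' d us' c s] r(2) r'(2) by simp
      then show ?thesis using eqv_refl by simp
    next
      assume h: "p @ us = p' \<and> (u, c) # s = us @ (v, d) # s'"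
      then obtain us' where us: "us = (u, c) # us'" using uv by (cases us) auto
      then have "r = p @ [(u, c)] @ us' @ [(v, d)] @ s'" using h r' by simp
      moreover have "s = us' @ [(v, d)] @ s'" using h us by simp
      ultimately show ?thesis using comm_ord[OF assms, of r p c us' d s'] r(2) r'(2) eqv_refl by simp
    qed
  qed
qed


definition nfr where "nfr r w = fold (\<lambda>l r. push r l) w r"

lemma nfr_Nil[simp]: "nfr r [] = r" unfolding nfr_def by simp
lemma nfr_Cons[simp]: "nfr r (x # w) = nfr (push r x) w" unfolding nfr_def by simp
lemma nfr_append[simp]: "nfr r (x @ w) = nfr (nfr r x) w" unfolding nfr_def by simp

lemma nfr_good: "good r \<Longrightarrow> gp_word M w \<Longrightarrow> good (nfr r w)"
proof (induction w arbitrary: r)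
  case (Cons x w)
  obtain v m where x: "x = (v, m)" by (cases x)
  then show ?case using Cons push_good by simp
qed simp

lemma nfr_cong: "good r \<Longrightarrow> gp_word M w \<Longrightarrow> gc (r @ w) (nfr r w)"
proof (induction w arbitrary: r)
  case Nil then show ?case by (simp add: gp_cong.refl)
next
  case (Cons x w)
  obtain v m where x: "x = (v, m)" by (cases x)
  have m: "m \<in> carrier (M v)" using Cons.prems x by simp
  have "gc (r @ [(v, m)]) (push r (v, m))" using push_cong Cons.prems m unfolding good_def by blast
  then have 1: "gc (r @ [(v, m)] @ w) (push r (v, m) @ w)" using cong_app_right by fastforce
  have "gc (push r (v, m) @ w) (nfr (push r (v, m)) w)"
    using Cons.IH push_good Cons.prems m by simp
  then show ?case using gp_cong.trans[OF 1] x by simp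
qed

lemma nfr_eqv: "eqv q q' \<Longrightarrow> eqv (nfr q w) (nfr q' w)"
proof (induction w arbitrary: q q')
  case (Cons x w)
  obtain v m where x: "x = (v, m)" by (cases x)
  then show ?case using Cons push_eqv by simp
qed simp

lemma main_inv: "gc u w \<Longrightarrow> gp_word M u \<Longrightarrow> good r \<Longrightarrow> eqv (nfr r u) (nfr r w)"
proof (induction arbitrary: r rule: gp_cong.induct)
  case (refl w) then show ?case by simp
next
  case (sym u w)
  have "gp_word M u" using word_pres[OF sym.hyps(1)] sym.prems by simp
  then show ?case using sym eqv_sym by blast
next
  case (trans u w z)
  have "gp_word M w" using word_pres[OF trans.hyps(1)] trans.prems by simp
  then show ?case using trans eqv_trans by blast
next
  case (compat u w x y)
  have g: "good (nfr r x)" using nfr_good compat.prems by simp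
  have "eqv (nfr (nfr r x) u) (nfr (nfr r x) w)" using compat.IH g compat.prems by simp
  then show ?case using nfr_eqv by simp
next
  case (mult a v b)
  then show ?case using push_mult by simp
next
  case (one v)
  then show ?case using push_one by simp
next
  case (comm u v a b)
  then show ?case using push_comm by simp
qed

lemma infoN: assumes "m \<noteq> \<one>\<^bsub>M v\<^esub>" "splt v q = None"
  shows "push q (v, m) = q @ [(v, m)] \<and> splt v (push q (v, m)) = Some (q, m, [])"
proof -
  have 1: "push q (v, m) = q @ [(v, m)]" using push_None[OF assms(2)] assms(1) by simp
  have "splt v (q @ [(v, m)]) = Some (q, m, [])" by (rule splt_complete') (auto simp: adj_def)
  then show ?thesis using 1 by simp
qed

lemma infoS: assumes gq: "good q" and S: "splt v q = Some (p, a, s)"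
  shows "q = p @ [(v, a)] @ s \<and> adj s v \<and> a \<in> carrier (M v) \<and> a \<noteq> \<one>\<^bsub>M v\<^esub> \<and>
     (a \<otimes>\<^bsub>M v\<^esub> m = \<one>\<^bsub>M v\<^esub> \<longrightarrow> push q (v, m) = p @ s \<and> splt v (push q (v, m)) = None) \<and>
     (a \<otimes>\<^bsub>M v\<^esub> m \<noteq> \<one>\<^bsub>M v\<^esub> \<longrightarrow> push q (v, m) = p @ [(v, a \<otimes>\<^bsub>M v\<^esub> m)] @ s \<and>
          splt v (push q (v, m)) = Some (p, a \<otimes>\<^bsub>M v\<^esub> m, s))"
proof -
  have q: "q = p @ [(v, a)] @ s" "adj s v" using splt_sound S by auto
  have a: "a \<in> carrier (M v)" "a \<noteq> \<one>\<^bsub>M v\<^esub>" using gq q unfolding good_def nid_def by auto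
  have n: "splt v (p @ s) = None" using vred_splt gq S unfolding good_def by blast
  have so: "splt v (p @ [(v, a \<otimes>\<^bsub>M v\<^esub> m)] @ s) = Some (p, a \<otimes>\<^bsub>M v\<^esub> m, s)"
    using splt_complete q by blast
  have P: "push q (v, m) = (if a \<otimes>\<^bsub>M v\<^esub> m = \<one>\<^bsub>M v\<^esub> then p @ s else p @ [(v, a \<otimes>\<^bsub>M v\<^esub> m)] @ s)"
    by (rule push_Some[OF S])
  show ?thesis
  proof (cases "a \<otimes>\<^bsub>M v\<^esub> m = \<one>\<^bsub>M v\<^esub>")
    case True
    then have "push q (v, m) = p @ s" using P by simp
    then show ?thesis using True q a n by simp
  next
    case False
    then have "push q (v, m) = p @ [(v, a \<otimes>\<^bsub>M v\<^esub> m)] @ s" using P by simp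
    then show ?thesis using False q a so by simp
  qed
qed

lemma K: assumes rc: "right_cancellative (M v)" and g: "good r" "good r'" and m: "m \<in> carrier (M v)"
  and e: "eqv (push r (v, m)) (push r' (v, m))"
  shows "eqv r r'"
proof (cases "m = \<one>\<^bsub>M v\<^esub>")
  case True then show ?thesis using e push_one g by simp
next
  case mne: False
  have canc: "\<And>a b. a \<in> carrier (M v) \<Longrightarrow> b \<in> carrier (M v) \<Longrightarrow> a \<otimes>\<^bsub>M v\<^esub> m = b \<otimes>\<^bsub>M v\<^esub> m \<Longrightarrow> a = b"
    using rc m unfolding right_cancellative_def by blast
  have one_m: "\<one>\<^bsub>M v\<^esub> \<otimes>\<^bsub>M v\<^esub> m = m" using monoid.l_one[OF mon] m by blast
  have onec: "\<one>\<^bsub>M v\<^esub> \<in> carrier (M v)" using monoid.one_closed[OF mon] by blast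
  have info: "\<And>q. splt v q = None \<Longrightarrow> push q (v, m) = q @ [(v, m)] \<and> splt v (push q (v, m)) = Some (q, m, [])"
    using infoN[OF mne] by blast
  have ac: "\<And>a. a \<in> carrier (M v) \<Longrightarrow> a \<otimes>\<^bsub>M v\<^esub> m \<in> carrier (M v)" using monoid.m_closed[OF mon] m by blast
  have tv': "\<And>p c s p' c' s'. splt v (push r (v, m)) = Some (p, c, s) \<Longrightarrow> splt v (push r' (v, m)) = Some (p', c', s') \<Longrightarrow> c = c'"
    using tv[OF e] by fastforce
  have tvN: "splt v (push r (v, m)) = None \<longleftrightarrow> splt v (push r' (v, m)) = None"
    using tv_None e eqv_sym by blast
  show ?thesis
  proof (cases "splt v r")
    case None
    note I = info[OF None]
    have IS: "splt v (push r (v, m)) = Some (r, m, [])" using I by blast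
    show ?thesis
    proof (cases "splt v r'")
      case None2: None
      note I2 = info[OF None2]
      have "push r (v, m) = r @ [(v, m)]" "push r' (v, m) = r' @ [(v, m)]" using I I2 by blast+
      then have "eqv (r @ [(v, m)] @ []) (r' @ [(v, m)] @ [])" using e by simp
      then have "eqv (r @ []) (r' @ [])" by (rule Q3[rotated 2]) (auto simp: adj_def)
      then show ?thesis by simp
    next
      case (Some t)
      then obtain p' a' s' where S': "splt v r' = Some (p', a', s')" by (cases t) auto
      note I2 = infoS[OF g(2) S', of m]
      have a': "a' \<in> carrier (M v)" "a' \<noteq> \<one>\<^bsub>M v\<^esub>" using I2 by blast+
      show ?thesis
      proof (cases "a' \<otimes>\<^bsub>M v\<^esub> m = \<one>\<^bsub>M v\<^esub>")
        case True
        have "splt v (push r' (v, m)) = None" using I2 True by blast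
        then have "splt v (push r (v, m)) = None" using tvN by blast
        then show ?thesis using IS by simp
      next
        case False
        have "splt v (push r' (v, m)) = Some (p', a' \<otimes>\<^bsub>M v\<^esub> m, s')" using I2 False by blast
        then have "m = a' \<otimes>\<^bsub>M v\<^esub> m" using tv'[OF IS] by blast
        then have "a' \<otimes>\<^bsub>M v\<^esub> m = \<one>\<^bsub>M v\<^esub> \<otimes>\<^bsub>M v\<^esub> m" using one_m by simp
        then have "a' = \<one>\<^bsub>M v\<^esub>" using canc[OF a'(1) onec] by blast
        then show ?thesis using a'(2) by blast
      qed
    qed
  next
    case (Some t)
    then obtain p a s where S: "splt v r = Some (p, a, s)" by (cases t) auto
    note I = infoS[OF g(1) S, of m]
    have a: "a \<in> carrier (M v)" "a \<noteq> \<one>\<^bsub>M v\<^esub>" using I by blast+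
    have r: "r = p @ [(v, a)] @ s" "adj s v" using I by blast+
    show ?thesis
    proof (cases "splt v r'")
      case None2: None
      note I2 = info[OF None2]
      have IS2: "splt v (push r' (v, m)) = Some (r', m, [])" using I2 by blast
      show ?thesis
      proof (cases "a \<otimes>\<^bsub>M v\<^esub> m = \<one>\<^bsub>M v\<^esub>")
        case True
        have "splt v (push r (v, m)) = None" using I True by blast
        then have "splt v (push r' (v, m)) = None" using tvN by blast
        then show ?thesis using IS2 by simp
      next
        case False
        have "splt v (push r (v, m)) = Some (p, a \<otimes>\<^bsub>M v\<^esub> m, s)" using I False by blast
        then have "a \<otimes>\<^bsub>M v\<^esub> m = m" using tv' IS2 by blast
        then have "a \<otimes>\<^bsub>M v\<^esub> m = \<one>\<^bsub>M v\<^esub> \<otimes>\<^bsub>M v\<^esub> m" using one_m by simp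
        then have "a = \<one>\<^bsub>M v\<^esub>" using canc[OF a(1) onec] by blast
        then show ?thesis using a(2) by blast
      qed
    next
      case (Some t2)
      then obtain p' a' s' where S': "splt v r' = Some (p', a', s')" by (cases t2) auto
      note I2 = infoS[OF g(2) S', of m]
      have a': "a' \<in> carrier (M v)" "a' \<noteq> \<one>\<^bsub>M v\<^esub>" using I2 by blast+
      have r': "r' = p' @ [(v, a')] @ s'" "adj s' v" using I2 by blast+
      show ?thesis
      proof (cases "a \<otimes>\<^bsub>M v\<^esub> m = \<one>\<^bsub>M v\<^esub>")
        case True
        have N1: "splt v (push r (v, m)) = None" using I True by blast
        show ?thesis
        proof (cases "a' \<otimes>\<^bsub>M v\<^esub> m = \<one>\<^bsub>M v\<^esub>")
          case True2: True
          have "a \<otimes>\<^bsub>M v\<^esub> m = a' \<otimes>\<^bsub>M v\<^esub> m" using True True2 by simp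
          then have aa: "a = a'" using canc[OF a(1) a'(1)] by blast
          have "push r (v, m) = p @ s" "push r' (v, m) = p' @ s'" using I I2 True True2 by blast+
          then have "eqv (p @ s) (p' @ s')" using e by simp
          then have "eqv (p @ [(v, a)] @ s) (p' @ [(v, a)] @ s')" using Q2[OF r(2) r'(2)] by blast
          then show ?thesis using aa r(1) r'(1) by simp
        next
          case False
          have "splt v (push r' (v, m)) = Some (p', a' \<otimes>\<^bsub>M v\<^esub> m, s')" using I2 False by blast
          then show ?thesis using N1 tvN by simp
        qed
      next
        case False
        have S1: "splt v (push r (v, m)) = Some (p, a \<otimes>\<^bsub>M v\<^esub> m, s)" using I False by blast
        show ?thesis
        proof (cases "a' \<otimes>\<^bsub>M v\<^esub> m = \<one>\<^bsub>M v\<^esub>")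
          case True
          have "splt v (push r' (v, m)) = None" using I2 True by blast
          then show ?thesis using S1 tvN by simp
        next
          case False2: False
          have S2: "splt v (push r' (v, m)) = Some (p', a' \<otimes>\<^bsub>M v\<^esub> m, s')" using I2 False2 by blast
          have "a \<otimes>\<^bsub>M v\<^esub> m = a' \<otimes>\<^bsub>M v\<^esub> m" using tv'[OF S1 S2] .
          then have aa: "a = a'" using canc[OF a(1) a'(1)] by blast
          have "push r (v, m) = p @ [(v, a \<otimes>\<^bsub>M v\<^esub> m)] @ s" "push r' (v, m) = p' @ [(v, a' \<otimes>\<^bsub>M v\<^esub> m)] @ s'"
            using I I2 False False2 by blast+
          then have "eqv (p @ [(v, a \<otimes>\<^bsub>M v\<^esub> m)] @ s) (p' @ [(v, a' \<otimes>\<^bsub>M v\<^esub> m)] @ s')" using e by simp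
          then have "eqv (p @ [(v, a)] @ s) (p' @ [(v, a)] @ s')" using Q[OF r(2) r'(2)] by blast
          then show ?thesis using aa r(1) r'(1) by simp
        qed
      qed
    qed
  qed
qed

lemma good_Nil: "good []" unfolding good_def nid_def vred_def by simp

lemma right_cancel_letter:
  assumes rc: "\<forall>v. right_cancellative (M v)" and w: "gp_word M x" "gp_word M y" "m \<in> carrier (M v)"
    and c: "gc (x @ [(v, m)]) (y @ [(v, m)])"
  shows "gc x y"
proof -
  have "eqv (nfr [] (x @ [(v, m)])) (nfr [] (y @ [(v, m)]))"
    using main_inv[OF c] w good_Nil by simp
  then have "eqv (push (nfr [] x) (v, m)) (push (nfr [] y) (v, m))" by simp
  moreover have gx: "good (nfr [] x)" "good (nfr [] y)" using nfr_good good_Nil w by auto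
  ultimately have e: "eqv (nfr [] x) (nfr [] y)" using K[OF spec[OF rc] gx(1) gx(2) w(3)] by blast
  have 1: "gc (nfr [] x) (nfr [] y)" using eqv_imp_cong[OF _ _ e] gx unfolding good_def by blast
  have 2: "gc x (nfr [] x)" "gc y (nfr [] y)" using nfr_cong[OF good_Nil] w by auto
  show ?thesis using gp_cong.trans[OF 2(1) gp_cong.trans[OF 1 gp_cong.sym[OF 2(2)]]] .
qed

lemma right_cancel_words:
  assumes rc: "\<forall>v. right_cancellative (M v)" and w: "gp_word M x" "gp_word M y" "gp_word M c"
    and h: "gc (x @ c) (y @ c)"
  shows "gc x y"
  using w(3) h
proof (induction c rule: rev_induct)
  case Nil then show ?case by simp
next
  case (snoc l c)
  obtain v m where l: "l = (v, m)" by (cases l)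
  have "gc ((x @ c) @ [(v, m)]) ((y @ c) @ [(v, m)])" using snoc.prems l by simp
  moreover have "gp_word M (x @ c)" "gp_word M (y @ c)" "m \<in> carrier (M v)" using w snoc.prems l by auto
  ultimately have "gc (x @ c) (y @ c)" using right_cancel_letter[OF rc] by blast
  then show ?case using snoc.IH snoc.prems by simp
qed

end

definition opp :: "('v \<Rightarrow> ('a, 'b) monoid_scheme) \<Rightarrow> 'v \<Rightarrow> ('a, 'b) monoid_scheme" where
  "opp M v = (M v)\<lparr>mult := \<lambda>a b. b \<otimes>\<^bsub>M v\<^esub> a\<rparr>"

lemma opp_simps[simp]: "carrier (opp M v) = carrier (M v)" "one (opp M v) = one (M v)"
  "mult (opp M v) a b = mult (M v) b a"
  unfolding opp_def by simp_all

lemma monoid_opp: assumes "monoid (M v)" shows "monoid (opp M v)"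
proof (rule monoidI)
  show "\<And>x y. x \<in> carrier (opp M v) \<Longrightarrow> y \<in> carrier (opp M v) \<Longrightarrow> x \<otimes>\<^bsub>opp M v\<^esub> y \<in> carrier (opp M v)"
    using monoid.m_closed[OF assms] by simp
  show "\<one>\<^bsub>opp M v\<^esub> \<in> carrier (opp M v)" using monoid.one_closed[OF assms] by simp
  show "\<And>x y z. x \<in> carrier (opp M v) \<Longrightarrow> y \<in> carrier (opp M v) \<Longrightarrow> z \<in> carrier (opp M v) \<Longrightarrow>
     x \<otimes>\<^bsub>opp M v\<^esub> y \<otimes>\<^bsub>opp M v\<^esub> z = x \<otimes>\<^bsub>opp M v\<^esub> (y \<otimes>\<^bsub>opp M v\<^esub> z)"
    using monoid.m_assoc[OF assms] by simp
  show "\<And>x. x \<in> carrier (opp M v) \<Longrightarrow> \<one>\<^bsub>opp M v\<^esub> \<otimes>\<^bsub>opp M v\<^esub> x = x"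
    using monoid.r_one[OF assms] by simp
  show "\<And>x. x \<in> carrier (opp M v) \<Longrightarrow> x \<otimes>\<^bsub>opp M v\<^esub> \<one>\<^bsub>opp M v\<^esub> = x"
    using monoid.l_one[OF assms] by simp
qed

lemma word_opp[simp]: "gp_word (opp M) w = gp_word M w"
  unfolding gp_word_def by simp

lemma rc_opp: "right_cancellative (opp M v) \<longleftrightarrow> left_cancellative (M v)"
  unfolding right_cancellative_def left_cancellative_def by simp

lemma rev_cong1: assumes symm: "\<And>u v. E u v \<Longrightarrow> E v u"
  shows "gp_cong E M u w \<Longrightarrow> gp_cong E (opp M) (rev u) (rev w)"
proof (induction rule: gp_cong.induct)
  case (refl w) then show ?case by (rule gp_cong.refl)
next
  case (sym u w) from sym.IH show ?case by (rule gp_cong.sym)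
next
  case (trans u w z) from trans.IH show ?case by (rule gp_cong.trans)
next
  case (compat u w x y) then show ?case using gp_cong.compat by fastforce
next
  case (mult a v b)
  have "gp_cong E (opp M) [(v, b), (v, a)] [(v, b \<otimes>\<^bsub>opp M v\<^esub> a)]" by (rule gp_cong.mult) (use mult in auto)
  then show ?case by simp
next
  case (one v)
  have "gp_cong E (opp M) [(v, \<one>\<^bsub>opp M v\<^esub>)] []" by (rule gp_cong.one)
  then show ?case by simp
next
  case (comm u v a b)
  have "gp_cong E (opp M) [(v, b), (u, a)] [(u, a), (v, b)]" by (rule gp_cong.comm) (use comm symm in auto)
  then show ?case by simp
qed

lemma rev_cong2: assumes symm: "\<And>u v. E u v \<Longrightarrow> E v u"
  shows "gp_cong E (opp M) u w \<Longrightarrow> gp_cong E M (rev u) (rev w)"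
proof (induction rule: gp_cong.induct)
  case (refl w) then show ?case by (rule gp_cong.refl)
next
  case (sym u w) from sym.IH show ?case by (rule gp_cong.sym)
next
  case (trans u w z) from trans.IH show ?case by (rule gp_cong.trans)
next
  case (compat u w x y) then show ?case using gp_cong.compat by fastforce
next
  case (mult a v b)
  have "gp_cong E M [(v, b), (v, a)] [(v, b \<otimes>\<^bsub>M v\<^esub> a)]" by (rule gp_cong.mult) (use mult in auto)
  then show ?case by simp
next
  case (one v)
  have "gp_cong E M [(v, \<one>\<^bsub>M v\<^esub>)] []" by (rule gp_cong.one)
  then show ?case by simp
next
  case (comm u v a b)
  have "gp_cong E M [(v, b), (u, a)] [(u, a), (v, b)]" by (rule gp_cong.comm) (use comm symm in auto)
  then show ?case by simp
qed

lemma gp_equiv: "equiv {w. gp_word M w} (gp_rel E M)"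
  unfolding equiv_def refl_on_def sym_def trans_def gp_rel_def
  by (auto intro: gp_cong.refl gp_cong.sym gp_cong.trans)

lemma class_mult: assumes "gp_word M x" "gp_word M y"
  shows "mult (graph_product E M) (gp_rel E M `` {x}) (gp_rel E M `` {y}) = gp_rel E M `` {x @ y}"
proof
  show "mult (graph_product E M) (gp_rel E M `` {x}) (gp_rel E M `` {y}) \<subseteq> gp_rel E M `` {x @ y}"
  proof
    fix z assume "z \<in> mult (graph_product E M) (gp_rel E M `` {x}) (gp_rel E M `` {y})"
    then obtain x' y' where h: "(x, x') \<in> gp_rel E M" "(y, y') \<in> gp_rel E M" "(x' @ y', z) \<in> gp_rel E M"
      unfolding graph_product_def by auto
    have "gp_cong E M (x @ y) (x' @ y)" using gp_cong.compat[of E M x x' "[]" y] h(1) unfolding gp_rel_def by simp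
    moreover have "gp_cong E M (x' @ y) (x' @ y')" using gp_cong.compat[of E M y y' x' "[]"] h(2) unfolding gp_rel_def by simp
    ultimately have "gp_cong E M (x @ y) z" using h(3) gp_cong.trans unfolding gp_rel_def by blast
    then show "z \<in> gp_rel E M `` {x @ y}" using h assms unfolding gp_rel_def by auto
  qed
next
  show "gp_rel E M `` {x @ y} \<subseteq> mult (graph_product E M) (gp_rel E M `` {x}) (gp_rel E M `` {y})"
  proof
    fix z assume z: "z \<in> gp_rel E M `` {x @ y}"
    have "x \<in> gp_rel E M `` {x}" "y \<in> gp_rel E M `` {y}"
      using equiv_class_self[OF gp_equiv] assms by auto
    then show "z \<in> mult (graph_product E M) (gp_rel E M `` {x}) (gp_rel E M `` {y})"
      using z unfolding graph_product_def by auto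
  qed
qed

lemma gp_right:
  assumes H: "\<And>x y c. gp_word M x \<Longrightarrow> gp_word M y \<Longrightarrow> gp_word M c \<Longrightarrow> gp_cong E M (x @ c) (y @ c) \<Longrightarrow> gp_cong E M x y"
  shows "right_cancellative (graph_product E M)"
  unfolding right_cancellative_def
proof (intro ballI impI)
  fix A B C assume A: "A \<in> carrier (graph_product E M)" and B: "B \<in> carrier (graph_product E M)"
    and C: "C \<in> carrier (graph_product E M)" and eq: "A \<otimes>\<^bsub>graph_product E M\<^esub> C = B \<otimes>\<^bsub>graph_product E M\<^esub> C"
  obtain x where x: "A = gp_rel E M `` {x}" "gp_word M x" using A unfolding graph_product_def by (auto elim: quotientE)
  obtain y where y: "B = gp_rel E M `` {y}" "gp_word M y" using B unfolding graph_product_def by (auto elim: quotientE)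
  obtain c where c: "C = gp_rel E M `` {c}" "gp_word M c" using C unfolding graph_product_def by (auto elim: quotientE)
  have "gp_rel E M `` {x @ c} = gp_rel E M `` {y @ c}"
    using eq class_mult[OF x(2) c(2), of E] class_mult[OF y(2) c(2), of E] unfolding x(1) y(1) c(1) by simp
  then have "(x @ c, y @ c) \<in> gp_rel E M" using eq_equiv_class_iff[OF gp_equiv, of "x @ c" M "y @ c" E] x y c by simp
  then have "gp_cong E M (x @ c) (y @ c)" unfolding gp_rel_def by simp
  then have "gp_cong E M x y" by (rule H[OF x(2) y(2) c(2)])
  then have "(x, y) \<in> gp_rel E M" using x y unfolding gp_rel_def by simp
  then show "A = B" using equiv_class_eq[OF gp_equiv] x y by simp
qed

lemma gp_left:
  assumes H: "\<And>x y c. gp_word M x \<Longrightarrow> gp_word M y \<Longrightarrow> gp_word M c \<Longrightarrow> gp_cong E M (c @ x) (c @ y) \<Longrightarrow> gp_cong E M x y"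
  shows "left_cancellative (graph_product E M)"
  unfolding left_cancellative_def
proof (intro ballI impI)
  fix A B C assume A: "A \<in> carrier (graph_product E M)" and B: "B \<in> carrier (graph_product E M)"
    and C: "C \<in> carrier (graph_product E M)" and eq: "C \<otimes>\<^bsub>graph_product E M\<^esub> A = C \<otimes>\<^bsub>graph_product E M\<^esub> B"
  obtain x where x: "A = gp_rel E M `` {x}" "gp_word M x" using A unfolding graph_product_def by (auto elim: quotientE)
  obtain y where y: "B = gp_rel E M `` {y}" "gp_word M y" using B unfolding graph_product_def by (auto elim: quotientE)
  obtain c where c: "C = gp_rel E M `` {c}" "gp_word M c" using C unfolding graph_product_def by (auto elim: quotientE)
  have "gp_rel E M `` {c @ x} = gp_rel E M `` {c @ y}"
    using eq class_mult[OF c(2) x(2), of E] class_mult[OF c(2) y(2), of E] unfolding x(1) y(1) c(1) by simp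
  then have "(c @ x, c @ y) \<in> gp_rel E M" using eq_equiv_class_iff[OF gp_equiv, of "c @ x" M "c @ y" E] x y c by simp
  then have "gp_cong E M (c @ x) (c @ y)" unfolding gp_rel_def by simp
  then have "gp_cong E M x y" by (rule H[OF x(2) y(2) c(2)])
  then have "(x, y) \<in> gp_rel E M" using x y unfolding gp_rel_def by simp
  then show "A = B" using equiv_class_eq[OF gp_equiv] x y by simp
qed

theorem theorem1p5:
  fixes E :: "'v \<Rightarrow> 'v \<Rightarrow> bool" and M :: "'v \<Rightarrow> ('a, 'b) monoid_scheme"
  assumes irrefl: "\<And>v. \<not> E v v"
    and symm: "\<And>u v. E u v \<Longrightarrow> E v u"
    and mon: "\<And>v. monoid (M v)"
  shows "((\<forall>v. right_cancellative (M v)) \<longrightarrow> right_cancellative (graph_product E M))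
       \<and> ((\<forall>v. left_cancellative (M v)) \<longrightarrow> left_cancellative (graph_product E M))
       \<and> ((\<forall>v. cancellative (M v)) \<longrightarrow> cancellative (graph_product E M))"
proof -
  interpret G: gpl E M by (rule gpl.intro[OF irrefl symm mon])
  interpret O: gpl E "opp M" by (rule gpl.intro[OF irrefl symm monoid_opp[where M=M, OF mon]])
  have R: "(\<forall>v. right_cancellative (M v)) \<Longrightarrow> right_cancellative (graph_product E M)"
    by (rule gp_right) (rule G.right_cancel_words, assumption+)
  have L: "left_cancellative (graph_product E M)" if lc: "\<forall>v. left_cancellative (M v)"
  proof (rule gp_left)
    fix x y c assume w: "gp_word M x" "gp_word M y" "gp_word M c" and h: "gp_cong E M (c @ x) (c @ y)"
    have h1: "gp_cong E (opp M) (rev (c @ x)) (rev (c @ y))" using rev_cong1[where M=M and E=E, OF G.symm h] .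
    have h2: "gp_cong E (opp M) (rev x @ rev c) (rev y @ rev c)" using h1 by simp
    have rc: "\<forall>v. right_cancellative (opp M v)" using lc by (simp add: rc_opp)
    have w2: "gp_word (opp M) (rev x)" "gp_word (opp M) (rev y)" "gp_word (opp M) (rev c)"
      using w by simp_all
    have "gp_cong E (opp M) (rev x) (rev y)" by (rule O.right_cancel_words[OF rc w2 h2])
    then have "gp_cong E M (rev (rev x)) (rev (rev y))" using rev_cong2[where M=M and E=E, OF G.symm] by blast
    then show "gp_cong E M x y" by simp
  qed
  show ?thesis using R L unfolding cancellative_def by blast
qed

end
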